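(* For $n=2$ threads, in the limit $m\to\infty$, the probability $\Pr[A]$ that the canonical race does not manifest satisfies: under Sequential Consistency, $\Pr[A]=1/6$; under Weak Ordering, $\Pr[A]=7/54\approx 0.1296$; under Total Store Order, $0.1315<\Pr[A]<0.1369$ (more precisely $58/441<\Pr[A]<58/441+1/189$).
   Context: Fix $m\ge 1$. A random program is a sequence $x_1,\dots,x_{m+2}$ of memory operations, each with a type in $\{\mathrm{LD},\mathrm{ST}\}$: $x_1,\dots,x_m$ have i.i.d. types, each $\mathrm{ST}$ with probability $1/2$ and $\mathrm{LD}$ with probability $1/2$; $x_{m+1}$ (the critical load) has type $\mathrm{LD}$ and $x_{m+2}$ (the critical store) has type $\mathrm{ST}$. The initial order is $S_0=(x_1,\dots,x_{m+2})$. A memory model is specified by the set of ordered type pairs $(\tau_1,\tau_2)$ for which an instruction of type $\tau_2$ may be moved ahead of an immediately preceding instruction of type $\tau_1$: Sequential Consistency (SC) allows no pair; Total Store Order (TSO) allows only the pair $(\mathrm{ST},\mathrm{LD})$ (a load may move ahead of a preceding store); Weak Ordering (WO) allows all four pairs. The settling process runs rounds $r=1,\dots,m+2$. Before round $r$, the current order $S_{r-1}$ consists of $x_1,\dots,x_{r-1}$ in some order in positions $1,\dots,r-1$, followed by $x_r,\dots,x_{m+2}$ in positions $r,\dots,m+2$. In round $r$, instruction $x_r$ (starting at position $r$) repeatedly attempts to swap with the instruction immediately preceding it in the current order: the attempt fails automatically if the pair (type of the preceding instruction, type of $x_r$) is not allowed by the memory model, or if $x_r$ is the critical store and the preceding instruction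 is the critical load; otherwise the attempt succeeds independently with probability $1/2$. The round ends when an attempt fails or $x_r$ reaches position $1$; the resulting order is $S_r$. The final order is $S_{m+2}$. Combined model with $n$ threads: generate one random program, then apply the settling process independently to $n$ copies of it (threads $T_1,\dots,T_n$), all under the same memory model. For thread $k$, let $\gamma_k$ be the number of instructions strictly between the critical load and the critical store in its final order, and $\Gamma_k=\gamma_k+2$. Let $s_1,\dots,s_n$ be i.i.d. shifts, independent of everything else, with $\Pr[s_k=j]=2^{-(j+1)}$ for $j\ge0$. $A$ is the event that the closed intervals $[s_k,s_k+\Gamma_k]$, $k=1,\dots,n$, are pairwise disjoint (the race does not manifest). *)

theory Defs
  imports "HOL-Probability.Probability"
begin

datatype optype = LD | ST

datatype memmodel = SC | TSO | WO

text \<open>allowed M t1 t2: an instruction of type t2 may move ahead of an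
  immediately preceding instruction of type t1.\<close>
fun allowed :: "memmodel \<Rightarrow> optype \<Rightarrow> optype \<Rightarrow> bool" where
  "allowed SC _ _ = False"
| "allowed TSO t1 t2 = (t1 = ST \<and> t2 = LD)"
| "allowed WO _ _ = True"

text \<open>Instructions x_1..x_{m+2} are indexed 0..m+1; index m is the critical
  load, index m+1 the critical store. A program is given by the list of the
  types of x_1..x_m.\<close>
definition prog_type :: "nat \<Rightarrow> optype list \<Rightarrow> nat \<Rightarrow> optype" where
  "prog_type m xs i = (if i < m then xs ! i else if i = m then LD else ST)"

definition random_prog :: "nat \<Rightarrow> optype list pmf" where
  "random_prog m = replicate_pmf m (map_pmf (\<lambda>b. if b then ST else LD) (bernoulli_pmf (1/2)))"

definition can_swap :: "memmodel \<Rightarrow> nat \<Rightarrow> optype list \<Rightarrow> nat \<Rightarrow> nat \<Rightarrow> bool" where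
  "can_swap M m xs y x =
     (allowed M (prog_type m xs y) (prog_type m xs x) \<and> \<not> (x = m + 1 \<and> y = m))"

text \<open>One round: instruction x moves into the already settled prefix, given
  in reversed order (head = immediately preceding instruction). Returns the new
  prefix in normal order.\<close>
fun move :: "(nat \<Rightarrow> nat \<Rightarrow> bool) \<Rightarrow> nat \<Rightarrow> nat list \<Rightarrow> nat list pmf" where
  "move can x [] = return_pmf [x]"
| "move can x (y # ys) =
     (if can y x then
        bernoulli_pmf (1/2) \<bind>
          (\<lambda>b. if b then map_pmf (\<lambda>l. l @ [y]) (move can x ys)
               else return_pmf (rev (y # ys) @ [x]))
      else return_pmf (rev (y # ys) @ [x]))"

fun settle :: "(nat \<Rightarrow> nat \<Rightarrow> bool) \<Rightarrow> nat \<Rightarrow> nat list pmf" where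
  "settle can 0 = return_pmf []"
| "settle can (Suc r) = settle can r \<bind> (\<lambda>pre. move can r (rev pre))"

definition final_order :: "memmodel \<Rightarrow> nat \<Rightarrow> optype list \<Rightarrow> nat list pmf" where
  "final_order M m xs = settle (can_swap M m xs) (m + 2)"

text \<open>Number of instructions strictly between the critical load and the
  critical store in an order.\<close>
definition gap :: "nat \<Rightarrow> nat list \<Rightarrow> nat" where
  "gap m l = length (takeWhile (\<lambda>z. z \<noteq> m + 1) (tl (dropWhile (\<lambda>z. z \<noteq> m) l)))"

definition Gamma :: "nat \<Rightarrow> nat list \<Rightarrow> nat" where
  "Gamma m l = gap m l + 2"

fun threads :: "nat \<Rightarrow> nat list pmf \<Rightarrow> nat list list pmf" where
  "threads 0 p = return_pmf []"
| "threads (Suc k) p = do { t \<leftarrow> p; ts \<leftarrow> threads k p; return_pmf (t # ts) }"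

definition intervals_disjoint :: "nat list \<Rightarrow> nat list \<Rightarrow> bool" where
  "intervals_disjoint G s =
     (\<forall>i < length G. \<forall>j < length G. i \<noteq> j \<longrightarrow>
        {s ! i .. s ! i + G ! i} \<inter> {s ! j .. s ! j + G ! j} = {})"

definition prob_A :: "memmodel \<Rightarrow> nat \<Rightarrow> nat \<Rightarrow> real" where
  "prob_A M m n = measure_pmf.prob
     (do { xs \<leftarrow> random_prog m;
           ts \<leftarrow> threads n (final_order M m xs);
           s \<leftarrow> replicate_pmf n (geometric_pmf (1/2));
           return_pmf (intervals_disjoint (map (Gamma m) ts) s) })
     {True}"

end

theory Submission
  imports Defs
begin


lemma int_cong_pmf:
  fixes f g :: "'a \<Rightarrow> real"
  shows "(\<And>y. y \<in> set_pmf p \<Longrightarrow> f y = g y) \<Longrightarrow> (\<integral>y. f y \<partial>p) = (\<integral>y. g y \<partial>p)"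
  by (rule integral_cong_AE) (auto simp: AE_measure_pmf_iff)

fun tg :: "nat \<Rightarrow> nat pmf" where
  "tg 0 = return_pmf 0"
| "tg (Suc n) = bind_pmf (bernoulli_pmf (1/2)) (\<lambda>b. if b then map_pmf Suc (tg n) else return_pmf 0)"

lemma set_tg: "set_pmf (tg n) \<subseteq> {..n}"
  by (induction n) (auto split: if_splits)

lemma move_char:
  "move can x ys = map_pmf (\<lambda>k. rev (drop k ys) @ [x] @ rev (take k ys)) (tg (length (takeWhile (\<lambda>y. can y x) ys)))"
proof (induction ys)
  case Nil
  then show ?case by simp
next
  case (Cons y ys)
  let ?F = "\<lambda>ys k. rev (drop k ys) @ [x] @ rev (take k ys)"
  show ?case
  proof (cases "can y x")
    case True
    have "move can x (y # ys) = bind_pmf (bernoulli_pmf (1/2)) (\<lambda>b. if b then map_pmf (\<lambda>l. l @ [y]) (move can x ys)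
               else return_pmf (rev (y # ys) @ [x]))" using True by simp
    also have "\<dots> = bind_pmf (bernoulli_pmf (1/2)) (\<lambda>b. map_pmf (?F (y#ys)) (if b then map_pmf Suc (tg (length (takeWhile (\<lambda>y. can y x) ys))) else return_pmf 0))"
      by (intro bind_pmf_cong refl) (auto simp: Cons pmf.map_comp o_def)
    also have "\<dots> = map_pmf (?F (y#ys)) (tg (length (takeWhile (\<lambda>y. can y x) (y#ys))))"
      using True by (simp add: map_bind_pmf)
    finally show ?thesis .
  qed simp
qed

fun Etg :: "nat \<Rightarrow> (nat \<Rightarrow> real) \<Rightarrow> real" where
  "Etg 0 f = f 0"
| "Etg (Suc n) f = Etg n (\<lambda>k. f (Suc k)) / 2 + f 0 / 2"

lemma finite_set_tg: "finite (set_pmf (tg n))"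
  using set_tg finite_subset by blast

lemma integral_bind_pmf_fin:
  fixes f :: "'b \<Rightarrow> real"
  assumes fin: "finite (set_pmf (bind_pmf M N))"
  shows "(\<integral>x. f x \<partial>bind_pmf M N) = (\<integral>x. (\<integral>y. f y \<partial>N x) \<partial>M)"
proof -
  define S where "S = set_pmf (bind_pmf M N)"
  define g where "g y = (if y \<in> S then f y else 0)" for y
  define B where "B = (\<Sum>y\<in>S. \<bar>f y\<bar>)"
  have bnd: "\<bar>g y\<bar> \<le> B" for y
    unfolding g_def B_def using fin S_def by (auto intro: member_le_sum)
  have "(\<integral>x. f x \<partial>bind_pmf M N) = (\<integral>x. g x \<partial>bind_pmf M N)"
    by (rule int_cong_pmf) (simp add: g_def S_def)
  also have "\<dots> = (\<integral>x. (\<integral>y. g y \<partial>N x) \<partial>M)"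
    using measurable_measure_pmf[of N] bnd
    unfolding measure_pmf_bind
    by (intro integral_bind[where K="count_space UNIV" and B=B and B'=1])
       (auto intro: prob_space.finite_measure[OF measure_pmf.prob_space_axioms]
         simp: measure_pmf.emeasure_space_1)
  also have "\<dots> = (\<integral>x. (\<integral>y. f y \<partial>N x) \<partial>M)"
    by (intro int_cong_pmf) (auto simp: g_def S_def)
  finally show ?thesis .
qed

lemma integral_tg: "(\<integral>k. f k \<partial>tg n) = Etg n f"
proof (induction n arbitrary: f)
  case 0
  then show ?case by simp
next
  case (Suc n)
  have "(\<integral>k. f k \<partial>tg (Suc n)) = (\<integral>b. (\<integral>k. f k \<partial>(if b then map_pmf Suc (tg n) else return_pmf 0)) \<partial>bernoulli_pmf (1/2))"
    unfolding tg.simps by (rule integral_bind_pmf_fin) (metis finite_set_tg tg.simps(2))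
  also have "\<dots> = Etg (Suc n) f" by (simp add: Suc)
  finally show ?case .
qed




lemma integral_bind_pmf_bounded:
  fixes f :: "'b \<Rightarrow> real"
  assumes "\<And>x. \<bar>f x\<bar> \<le> B"
  shows "(\<integral>x. f x \<partial>bind_pmf M N) = (\<integral>x. (\<integral>y. f y \<partial>N x) \<partial>M)"
  using measurable_measure_pmf[of N] assms
  unfolding measure_pmf_bind
  by (intro integral_bind[where K="count_space UNIV" and B=B and B'=1])
     (auto intro: prob_space.finite_measure[OF measure_pmf.prob_space_axioms]
       simp: measure_pmf.emeasure_space_1)

lemma geom_unfold_int:
  fixes f :: "nat \<Rightarrow> real"
  assumes "\<And>x. \<bar>f x\<bar> \<le> B"
  shows "(\<integral>x. f x \<partial>geometric_pmf (1/2)) = f 0 / 2 + (\<integral>x. f (Suc x) \<partial>geometric_pmf (1/2)) / 2"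
proof -
  have "(\<integral>x. f x \<partial>geometric_pmf (1/2)) = (\<integral>x. f x \<partial>(bind_pmf (bernoulli_pmf (1/2))
         (\<lambda>b. if b then return_pmf 0 else map_pmf Suc (geometric_pmf (1/2)))))"
    by (subst geometric_bind_pmf_unfold) auto
  also have "\<dots> = (\<integral>b. (\<integral>y. f y \<partial>(if b then return_pmf 0 else map_pmf Suc (geometric_pmf (1/2)))) \<partial>bernoulli_pmf (1/2))"
    by (rule integral_bind_pmf_bounded[OF assms])
  also have "\<dots> = f 0 / 2 + (\<integral>x. f (Suc x) \<partial>geometric_pmf (1/2)) / 2"
    by simp
  finally show ?thesis .
qed

lemma swap_int:
  fixes f :: "'a \<Rightarrow> 'b \<Rightarrow> real" and p :: "'a pmf" and q :: "'b pmf"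
  assumes "\<And>x y. \<bar>f x y\<bar> \<le> B"
  shows "(\<integral>a. (\<integral>b. f a b \<partial>q) \<partial>p) = (\<integral>b. (\<integral>a. f a b \<partial>p) \<partial>q)"
proof -
  have B: "\<And>z. \<bar>case_prod f z\<bar> \<le> B" using assms by (auto split: prod.splits)
  have "(\<integral>z. case_prod f z \<partial>(bind_pmf p (\<lambda>a. bind_pmf q (\<lambda>b. return_pmf (a,b))))) = (\<integral>a. (\<integral>b. f a b \<partial>q) \<partial>p)"
    by (simp add: integral_bind_pmf_bounded[OF B])
  moreover have "(\<integral>z. case_prod f z \<partial>(bind_pmf q (\<lambda>b. bind_pmf p (\<lambda>a. return_pmf (a,b))))) = (\<integral>b. (\<integral>a. f a b \<partial>p) \<partial>q)"
    by (simp add: integral_bind_pmf_bounded[OF B])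
  moreover have "bind_pmf p (\<lambda>a. bind_pmf q (\<lambda>b. return_pmf (a,b))) = bind_pmf q (\<lambda>b. bind_pmf p (\<lambda>a. return_pmf (a,b)))"
    by (rule bind_commute_pmf)
  ultimately show ?thesis by simp
qed

lemma geo_tail: "(\<integral>b. (if N < b then 1 else 0) \<partial>geometric_pmf (1/2)) = ((1/2::real)^(Suc N))"
proof (induction N)
  case 0
  have "(\<integral>b. (if 0 < b then 1 else 0::real) \<partial>geometric_pmf (1/2)) = (if 0 < (0::nat) then 1 else 0) / 2 + (\<integral>b. (if 0 < Suc b then 1 else 0::real) \<partial>geometric_pmf (1/2)) / 2"
    by (rule geom_unfold_int[where B=1]) simp
  then show ?case by simp
next
  case (Suc N)
  have "(\<integral>b. (if Suc N < b then 1 else 0::real) \<partial>geometric_pmf (1/2)) = (if Suc N < 0 then 1 else 0) / 2 + (\<integral>b. (if Suc N < Suc b then 1 else 0::real) \<partial>geometric_pmf (1/2)) / 2"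
    by (rule geom_unfold_int[where B=1]) simp
  then show ?case using Suc by simp
qed

lemma geo_half: "(\<integral>a. (1/2::real)^a \<partial>geometric_pmf (1/2)) = 2/3"
proof -
  define E where "E = (\<integral>a. (1/2::real)^a \<partial>geometric_pmf (1/2))"
  have "E = (1/2)^0 / 2 + (\<integral>a. (1/2::real)^(Suc a) \<partial>geometric_pmf (1/2)) / 2"
    unfolding E_def by (rule geom_unfold_int[where B=1]) (simp add: power_le_one)
  also have "(\<integral>a. (1/2::real)^(Suc a) \<partial>geometric_pmf (1/2)) = (\<integral>a. (1/2) * (1/2::real)^a \<partial>geometric_pmf (1/2))"
    by simp
  also have "\<dots> = E / 2" unfolding E_def by (subst integral_mult_right_zero) simp
  finally have "E = 1/2 + E/4" by simp
  then show ?thesis unfolding E_def[symmetric] by simp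
qed

lemma ivl_disj: "{a..a+g1::nat} \<inter> {b..b+g2} = {} \<longleftrightarrow> a+g1 < b \<or> b+g2 < a"
proof
  assume h: "{a..a+g1::nat} \<inter> {b..b+g2} = {}"
  show "a+g1 < b \<or> b+g2 < a"
  proof (rule ccontr)
    assume "\<not> (a+g1 < b \<or> b+g2 < a)"
    then have "max a b \<in> {a..a+g1} \<inter> {b..b+g2}" by auto
    with h show False by simp
  qed
qed auto

lemma disj2: "intervals_disjoint [g1, g2] [a, b] \<longleftrightarrow> a + g1 < b \<or> b + g2 < a"
  unfolding intervals_disjoint_def
  apply (simp add: numeral_2_eq_2 All_less_Suc ivl_disj Int_commute) 
  by auto

lemma integrable_bnd: "(\<And>x. \<bar>f x\<bar> \<le> B) \<Longrightarrow> integrable (measure_pmf p) (f::_\<Rightarrow>real)"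
  by (rule measure_pmf.integrable_const_bound[where B=B]) auto

lemma int_abs_le:
  fixes f :: "_ \<Rightarrow> real"
  fixes p :: "'a pmf"
  assumes "\<And>x. \<bar>f x\<bar> \<le> B" shows "\<bar>\<integral>x. f x \<partial>p\<bar> \<le> B"
proof -
  have "\<bar>\<integral>x. f x \<partial>p\<bar> \<le> (\<integral>x. \<bar>f x\<bar> \<partial>p)" by (rule integral_abs_bound)
  also have "\<dots> \<le> (\<integral>x. B \<partial>p)"
    by (rule integral_mono) (auto intro: integrable_bnd[where B=B] simp: assms)
  also have "\<dots> = B" by simp
  finally show ?thesis .
qed

lemma disj_prob:
  "pmf (bind_pmf (replicate_pmf 2 (geometric_pmf (1/2))) (\<lambda>s. return_pmf (intervals_disjoint [g1, g2] s))) True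
   = ((1/2)^g1 + (1/2)^g2) / 3"
proof -
  have r2: "replicate_pmf 2 p = bind_pmf p (\<lambda>a. bind_pmf p (\<lambda>b. return_pmf [a, b]))" for p :: "nat pmf"
    by (simp add: numeral_2_eq_2 bind_return_pmf bind_assoc_pmf)
  have "pmf (bind_pmf (replicate_pmf 2 (geometric_pmf (1/2))) (\<lambda>s. return_pmf (intervals_disjoint [g1, g2] s))) True
     = pmf (bind_pmf (geometric_pmf (1/2)) (\<lambda>a. bind_pmf (geometric_pmf (1/2)) (\<lambda>b. return_pmf (a + g1 < b \<or> b + g2 < a)))) True"
    by (simp add: r2 bind_assoc_pmf bind_return_pmf disj2)
  also have "\<dots> = (\<integral>a. (\<integral>b. ((if a + g1 < b then 1 else 0) + (if b + g2 < a then 1 else 0)) \<partial>geometric_pmf (1/2)) \<partial>geometric_pmf (1/2))"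
  proof -
    have ind: "\<And>a b. indicator {True} (a + g1 < b \<or> b + g2 < a) = (if a+g1<b then 1 else 0) + (if b+g2<a then 1 else 0::real)"
      by (auto simp: indicator_def)
    show ?thesis by (simp add: pmf_bind pmf_return ind)
  qed
  also have "\<dots> = (\<integral>a. (\<integral>b. (if a + g1 < b then 1 else 0::real) \<partial>geometric_pmf (1/2)) \<partial>geometric_pmf (1/2))
       + (\<integral>a. (\<integral>b. (if b + g2 < a then 1 else 0::real) \<partial>geometric_pmf (1/2)) \<partial>geometric_pmf (1/2))"
  proof -
    have i1: "integrable (measure_pmf (geometric_pmf (1/2))) (\<lambda>b. (if a + g1 < b then 1 else 0::real))" for a
      by (rule integrable_bnd[where B=1]) auto
    have i2: "integrable (measure_pmf (geometric_pmf (1/2))) (\<lambda>b. (if b + g2 < a then 1 else 0::real))" for a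
      by (rule integrable_bnd[where B=1]) auto
    have j1: "integrable (measure_pmf (geometric_pmf (1/2))) (\<lambda>a. (\<integral>b. (if a + g1 < b then 1 else 0::real) \<partial>geometric_pmf (1/2)))"
      by (rule integrable_bnd[where B=1], rule int_abs_le) auto
    have j2: "integrable (measure_pmf (geometric_pmf (1/2))) (\<lambda>a. (\<integral>b. (if b + g2 < a then 1 else 0::real) \<partial>geometric_pmf (1/2)))"
      by (rule integrable_bnd[where B=1], rule int_abs_le) auto
    have "(\<integral>a. (\<integral>b. ((if a + g1 < b then 1 else 0) + (if b + g2 < a then 1 else 0::real)) \<partial>geometric_pmf (1/2)) \<partial>geometric_pmf (1/2))
      = (\<integral>a. (\<integral>b. (if a + g1 < b then 1 else 0::real) \<partial>geometric_pmf (1/2)) + (\<integral>b. (if b + g2 < a then 1 else 0::real) \<partial>geometric_pmf (1/2)) \<partial>geometric_pmf (1/2))"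
      by (rule Bochner_Integration.integral_cong[OF refl], rule Bochner_Integration.integral_add[OF i1 i2])
    also have "\<dots> = (\<integral>a. (\<integral>b. (if a + g1 < b then 1 else 0::real) \<partial>geometric_pmf (1/2)) \<partial>geometric_pmf (1/2))
       + (\<integral>a. (\<integral>b. (if b + g2 < a then 1 else 0::real) \<partial>geometric_pmf (1/2)) \<partial>geometric_pmf (1/2))"
      by (rule Bochner_Integration.integral_add[OF j1 j2])
    finally show ?thesis .
  qed
  also have "(\<integral>a. (\<integral>b. (if b + g2 < a then 1 else 0::real) \<partial>geometric_pmf (1/2)) \<partial>geometric_pmf (1/2))
     = (\<integral>b. (\<integral>a. (if b + g2 < a then 1 else 0::real) \<partial>geometric_pmf (1/2)) \<partial>geometric_pmf (1/2))"
    by (rule swap_int[where f="\<lambda>a b. if b + g2 < a then 1 else 0::real" and B=1]) simp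
  also have "\<dots> = (\<integral>b. (1/2)^(Suc g2) * (1/2)^b \<partial>geometric_pmf (1/2))"
    by (rule Bochner_Integration.integral_cong[OF refl]) (simp add: geo_tail power_add)
  also have "(\<integral>a. (\<integral>b. (if a + g1 < b then 1 else 0::real) \<partial>geometric_pmf (1/2)) \<partial>geometric_pmf (1/2))
     = (\<integral>a. (1/2)^(Suc g1) * (1/2)^a \<partial>geometric_pmf (1/2))"
    by (rule Bochner_Integration.integral_cong[OF refl]) (simp add: geo_tail power_add)
  finally show ?thesis using geo_half by simp
qed




definition Eg :: "memmodel \<Rightarrow> nat \<Rightarrow> optype list \<Rightarrow> real" where
  "Eg M m xs = (\<integral>t. (1/2)^(gap m t) \<partial>final_order M m xs)"

lemma int_pair_avg:
  fixes h :: "'a \<Rightarrow> real" and p :: "'a pmf"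
  assumes "\<And>x. \<bar>h x\<bar> \<le> 1"
  shows "(\<integral>a. (\<integral>b. (h a + h b) / 3 \<partial>p) \<partial>p) = 2 * (\<integral>a. h a \<partial>p) / 3"
proof -
  have ih: "integrable (measure_pmf p) h" by (rule integrable_bnd[where B=1]) (simp add: assms)
  have "(\<integral>b. (h a + h b) / 3 \<partial>p) = (h a + (\<integral>b. h b \<partial>p)) / 3" for a
  proof -
    have "(\<integral>b. (h a + h b) / 3 \<partial>p) = (\<integral>b. (h a + h b) \<partial>p) / 3" by simp
    also have "(\<integral>b. (h a + h b) \<partial>p) = (\<integral>b. h a \<partial>p) + (\<integral>b. h b \<partial>p)"
      by (rule Bochner_Integration.integral_add) (auto intro: ih)
    finally show ?thesis by simp
  qed
  then have "(\<integral>a. (\<integral>b. (h a + h b) / 3 \<partial>p) \<partial>p) = (\<integral>a. (h a + (\<integral>b. h b \<partial>p)) / 3 \<partial>p)"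
    by simp
  also have "\<dots> = (\<integral>a. (h a + (\<integral>b. h b \<partial>p)) \<partial>p) / 3" by simp
  also have "(\<integral>a. (h a + (\<integral>b. h b \<partial>p)) \<partial>p) = (\<integral>a. h a \<partial>p) + (\<integral>a. (\<integral>b. h b \<partial>p) \<partial>p)"
    by (rule Bochner_Integration.integral_add) (auto intro: ih)
  finally show ?thesis by simp
qed

lemma disj_prob':
  "(\<integral>s. indicator {True} (intervals_disjoint [g1, g2] s) \<partial>replicate_pmf 2 (geometric_pmf (1/2))) = ((1/2)^g1 + (1/2)^g2) / (3::real)"
  using disj_prob[of g1 g2] by (simp add: pmf_bind pmf_return)

lemma threads2: "threads 2 p = bind_pmf p (\<lambda>a. bind_pmf p (\<lambda>b. return_pmf [a, b]))"
  by (simp add: numeral_2_eq_2 bind_return_pmf bind_assoc_pmf)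

lemma probA_red: "prob_A M m 2 = (\<integral>xs. Eg M m xs \<partial>random_prog m) / 6"
proof -
  define F where "F xs = final_order M m xs" for xs
  define h where "h t = (1/2::real)^(Gamma m t)" for t
  have hb: "\<bar>h t\<bar> \<le> 1" for t unfolding h_def by (simp add: power_le_one)
  have "prob_A M m 2 = (\<integral>xs. (\<integral>a. (\<integral>b. (h a + h b) / 3 \<partial>F xs) \<partial>F xs) \<partial>random_prog m)"
    unfolding prob_A_def measure_pmf_single
    by (simp add: pmf_bind threads2 bind_assoc_pmf bind_return_pmf disj_prob' h_def F_def)
  also have "\<dots> = (\<integral>xs. 2 * (\<integral>a. h a \<partial>F xs) / 3 \<partial>random_prog m)"
    by (rule Bochner_Integration.integral_cong[OF refl], rule int_pair_avg[OF hb])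
  also have "\<dots> = (\<integral>xs. Eg M m xs / 6 \<partial>random_prog m)"
    by (rule Bochner_Integration.integral_cong[OF refl])
       (simp add: Eg_def F_def h_def Gamma_def power_add)
  finally show ?thesis by simp
qed




lemma set_move: "l \<in> set_pmf (move can x ys) \<Longrightarrow> set l = insert x (set ys) \<and> length l = Suc (length ys)"
proof -
  assume "l \<in> set_pmf (move can x ys)"
  then obtain k where "l = rev (drop k ys) @ [x] @ rev (take k ys)"
    by (auto simp: move_char)
  moreover have "set ys = set (take k ys) \<union> set (drop k ys)" by (metis append_take_drop_id set_append)
  ultimately show ?thesis by auto
qed

lemma settle_set: "l \<in> set_pmf (settle can r) \<Longrightarrow> set l = {..<r} \<and> length l = r"
proof (induction r arbitrary: l)
  case 0
  then show ?case by simp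
next
  case (Suc r)
  then obtain pre where pre: "pre \<in> set_pmf (settle can r)" and l: "l \<in> set_pmf (move can r (rev pre))"
    by auto
  from Suc.IH[OF pre] set_move[OF l] show ?case by (auto simp: lessThan_Suc)
qed

lemma finite_settle: "finite (set_pmf (settle can r))"
proof (rule finite_subset)
  show "set_pmf (settle can r) \<subseteq> {l. set l \<subseteq> {..<r} \<and> length l = r}"
    using settle_set by fastforce
  show "finite {l. set l \<subseteq> {..<r} \<and> length l = r}"
    by (rule finite_lists_length_eq) simp
qed

lemma finite_move: "finite (set_pmf (move can x ys))"
  by (simp add: move_char finite_set_tg)

lemma gap_form: "m \<notin> set A \<Longrightarrow> Suc m \<notin> set B \<Longrightarrow> gap m (A @ m # B @ Suc m # C) = length B"
  unfolding gap_def
  by (induction A) (auto simp: takeWhile_append)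

lemma tw_bound: "\<not> Q x \<Longrightarrow> length (takeWhile Q (A @ x # B)) \<le> length A"
  by (induction A) auto

lemma tw_le: "length (takeWhile Q A) \<le> length A"
  by (induction A) auto

lemma gap_calc:
  assumes P: "set P = {..<m}" and k: "k \<le> length P" and j: "j \<le> k"
  shows "gap m (rev (drop j (take k P @ m # drop k P)) @ [Suc m] @ rev (take j (take k P @ m # drop k P))) = k - j"
proof -
  define Q where "Q = take k P @ m # drop k P"
  have d: "drop j Q = drop j (take k P) @ m # drop k P"
    using j k by (simp add: Q_def)
  have eq: "rev (drop j Q) @ [Suc m] @ rev (take j Q) = rev (drop k P) @ m # rev (drop j (take k P)) @ Suc m # rev (take j Q)"
    by (simp add: d)
  have "m \<notin> set (rev (drop k P))" using P set_drop_subset[of k P] by auto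
  moreover have "Suc m \<notin> set (rev (drop j (take k P)))"
    using P set_drop_subset[of j "take k P"] set_take_subset[of k P] by auto
  ultimately have "gap m (rev (drop k P) @ m # rev (drop j (take k P)) @ Suc m # rev (take j Q)) = length (rev (drop j (take k P)))"
    by (rule gap_form)
  also have "\<dots> = k - j" using k by simp
  finally show ?thesis using eq by (simp only: Q_def)
qed

lemma final_gap:
  fixes f :: "nat \<Rightarrow> real"
  assumes nc: "\<not> can m (Suc m)"
  shows "(\<integral>t. f (gap m t) \<partial>settle can (m+2)) =
    (\<integral>pre. Etg (length (takeWhile (\<lambda>y. can y m) (rev pre)))
       (\<lambda>k. Etg (length (takeWhile (\<lambda>y. can y (Suc m)) (take k (rev pre) @ m # drop k (rev pre)))) (\<lambda>j. f (k - j)))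
     \<partial>settle can m)"
proof -
  have "(\<integral>t. f (gap m t) \<partial>settle can (m+2)) =
     (\<integral>pre'. (\<integral>t. f (gap m t) \<partial>move can (Suc m) (rev pre')) \<partial>settle can (Suc m))"
    using finite_settle[of can "m+2"] by (simp add: integral_bind_pmf_fin)
  also have "\<dots> = (\<integral>pre. (\<integral>pre'. (\<integral>t. f (gap m t) \<partial>move can (Suc m) (rev pre')) \<partial>move can m (rev pre)) \<partial>settle can m)"
    using finite_settle[of can "Suc m"] by (simp add: integral_bind_pmf_fin)
  also have "\<dots> = (\<integral>pre. Etg (length (takeWhile (\<lambda>y. can y m) (rev pre)))
       (\<lambda>k. Etg (length (takeWhile (\<lambda>y. can y (Suc m)) (take k (rev pre) @ m # drop k (rev pre)))) (\<lambda>j. f (k - j)))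
     \<partial>settle can m)"
  proof (rule int_cong_pmf)
    fix pre assume pre: "pre \<in> set_pmf (settle can m)"
    define P where "P = rev pre"
    have sP: "set P = {..<m}" using settle_set[OF pre] by (simp add: P_def)
    define c1 where "c1 = length (takeWhile (\<lambda>y. can y m) P)"
    define c2 where "c2 k = length (takeWhile (\<lambda>y. can y (Suc m)) (take k P @ m # drop k P))" for k
    have c1: "c1 \<le> length P" unfolding c1_def by (rule tw_le)
    have c2: "c2 k \<le> k" if "k \<le> length P" for k
      using tw_bound[of "\<lambda>y. can y (Suc m)" m "take k P" "drop k P"] nc that by (simp add: c2_def)
    have "(\<integral>pre'. (\<integral>t. f (gap m t) \<partial>move can (Suc m) (rev pre')) \<partial>move can m P)
       = (\<integral>k. (\<integral>j. f (gap m (rev (drop j (take k P @ m # drop k P)) @ [Suc m] @ rev (take j (take k P @ m # drop k P)))) \<partial>tg (c2 k)) \<partial>tg c1)"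
      by (simp add: move_char c1_def c2_def)
    also have "\<dots> = (\<integral>k. (\<integral>j. f (k - j) \<partial>tg (c2 k)) \<partial>tg c1)"
    proof (rule int_cong_pmf)
      fix k assume k: "k \<in> set_pmf (tg c1)"
      then have kP: "k \<le> length P" using set_tg c1 by fastforce
      show "(\<integral>j. f (gap m (rev (drop j (take k P @ m # drop k P)) @ [Suc m] @ rev (take j (take k P @ m # drop k P)))) \<partial>tg (c2 k)) = (\<integral>j. f (k - j) \<partial>tg (c2 k))"
      proof (rule int_cong_pmf)
        fix j assume "j \<in> set_pmf (tg (c2 k))"
        then have "j \<le> k" using set_tg c2[OF kP] by fastforce
        then show "f (gap m (rev (drop j (take k P @ m # drop k P)) @ [Suc m] @ rev (take j (take k P @ m # drop k P)))) = f (k - j)"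
          using gap_calc[OF sP kP] by simp
      qed
    qed
    also have "\<dots> = Etg c1 (\<lambda>k. Etg (c2 k) (\<lambda>j. f (k - j)))"
      by (simp add: integral_tg)
    finally show "(\<integral>pre'. (\<integral>t. f (gap m t) \<partial>move can (Suc m) (rev pre')) \<partial>move can m (rev pre)) =
      Etg (length (takeWhile (\<lambda>y. can y m) (rev pre)))
       (\<lambda>k. Etg (length (takeWhile (\<lambda>y. can y (Suc m)) (take k (rev pre) @ m # drop k (rev pre)))) (\<lambda>j. f (k - j)))"
      by (simp add: P_def c1_def c2_def)
  qed
  finally show ?thesis .
qed




lemma Etg_cong: "(\<And>k. k \<le> n \<Longrightarrow> f k = g k) \<Longrightarrow> Etg n f = Etg n g"
proof (induction n arbitrary: f g)
  case 0
  then show ?case by simp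
next
  case (Suc n)
  have "Etg n (\<lambda>k. f (Suc k)) = Etg n (\<lambda>k. g (Suc k))" by (rule Suc.IH) (simp add: Suc.prems)
  then show ?case using Suc.prems[of 0] by simp
qed

lemma Etg_lin: "Etg n (\<lambda>k. a * f k + b * g k + c) = a * Etg n f + b * Etg n g + c"
proof (induction n arbitrary: f g)
  case 0
  then show ?case by simp
next
  case (Suc n)
  have "Etg n (\<lambda>k. a * f (Suc k) + b * g (Suc k) + c) = a * Etg n (\<lambda>k. f (Suc k)) + b * Etg n (\<lambda>k. g (Suc k)) + c"
    by (rule Suc.IH)
  then show ?case unfolding Etg.simps by (simp add: field_simps)
qed

lemma gen_aux: "(2::real) - a \<noteq> 0 \<Longrightarrow> a * (1/(2-a) + t*(1-a)/(2-a))/2 + 1/2 = 1/(2-a) + (a/2*t)*(1-a)/(2-a)"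
proof -
  assume d: "(2::real) - a \<noteq> 0"
  define e where "e = 1/(2-a)"
  have e: "e * (2-a) = 1" using d by (simp add: e_def)
  have "a*(e + t*(1-a)*e)/2 + 1/2 - (e + (a/2*t)*(1-a)*e) = (1 - e*(2-a))/2"
    by (simp add: field_simps)
  then have "a*(e + t*(1-a)*e)/2 + 1/2 = e + (a/2*t)*(1-a)*e" using e by simp
  then show ?thesis by (simp add: e_def)
qed

lemma Etg_pow:
  fixes a :: real assumes "a \<noteq> 2"
  shows "Etg s (\<lambda>k. a^k) = 1/(2-a) + (a/2)^s * (1-a)/(2-a)"
proof (induction s)
  case 0
  then show ?case using assms by (simp add: field_simps)
next
  case (Suc s)
  have "Etg (Suc s) (\<lambda>k. a^k) = Etg s (\<lambda>k. a * a^k + 0 * a^k + 0) / 2 + 1/2" by simp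
  also have "\<dots> = a * Etg s (\<lambda>k. a^k) / 2 + 1/2" by (subst Etg_lin) simp
  also have "\<dots> = 1/(2-a) + (a/2 * (a/2)^s) * (1-a)/(2-a)"
  proof -
    have gen: "a * (1/(2-a) + t*(1-a)/(2-a))/2 + 1/2 = 1/(2-a) + (a/2*t)*(1-a)/(2-a)" for t
      using assms by (intro gen_aux) simp
    show ?thesis unfolding Suc by (rule gen)
  qed
  also have "\<dots> = 1/(2-a) + (a/2)^(Suc s) * (1-a)/(2-a)" by simp
  finally show ?case .
qed

lemma Etg_inner: "Etg k (\<lambda>j. 1 / (2::real)^(k-j)) = (real k + 2) / 2^(Suc k)"
proof (induction k)
  case 0
  then show ?case by simp
next
  case (Suc k)
  have "Etg (Suc k) (\<lambda>j. 1/(2::real)^(Suc k-j)) = Etg k (\<lambda>j. 1/(2::real)^(k-j)) / 2 + 1/2^(Suc k) / 2"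
    by simp
  then show ?case by (simp add: Suc field_simps)
qed

lemma Etg_explicit: "Etg n f = (\<Sum>k<n. (1/2)^(Suc k) * f k) + (1/2)^n * f n"
proof (induction n arbitrary: f)
  case 0
  then show ?case by simp
next
  case (Suc n)
  have "Etg (Suc n) f = ((\<Sum>k<n. (1/2)^(Suc k) * f (Suc k)) + (1/2)^n * f (Suc n)) / 2 + f 0 / 2"
    by (simp add: Suc)
  moreover have "(\<Sum>k<Suc n. (1/2::real)^(Suc k) * f k) = f 0 / 2 + (\<Sum>k<n. (1/2)^(Suc k) * f (Suc k)) / 2"
    by (subst sum.lessThan_Suc_shift) (simp add: sum_divide_distrib)
  ultimately show ?case by simp
qed

lemma sum_closed: "(\<Sum>k<m. (real k + 2) * (1/4)^k / 4) = 7/9 - (3 * real m + 7) * (1/4)^m / 9"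
proof (induction m)
  case 0
  then show ?case by simp
next
  case (Suc m)
  have gen: "7/9 - (3 * x + 7) * q / 9 + (x + 2) * q / 4 = 7/9 - (3 * (x+1) + 7) * (q/4) / 9" for x q :: real
    by (simp add: field_simps)
  have "(\<Sum>k<Suc m. (real k + 2) * (1/4)^k / 4) = 7/9 - (3 * real m + 7) * (1/4)^m / 9 + (real m + 2) * (1/4)^m / 4"
    by (simp only: sum.lessThan_Suc Suc.IH)
  also have "\<dots> = 7/9 - (3 * (real m + 1) + 7) * ((1/4)^m/4) / 9" by (rule gen)
  finally show ?case by simp
qed

definition W :: "nat \<Rightarrow> real" where
  "W m = Etg m (\<lambda>k. Etg k (\<lambda>j. (1/2)^(k-j)))"

lemma W_closed: "W m = 7/9 - (3 * real m + 7) / 9 * (1/4)^m + (real m + 2) / 2 * (1/4)^m"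
proof -
  have "W m = Etg m (\<lambda>k. (real k + 2) * (1/2)^(Suc k))"
    unfolding W_def by (rule Etg_cong) (simp add: Etg_inner power_one_over)
  also have "\<dots> = (\<Sum>k<m. (real k + 2) * (1/4)^(Suc k)) + (real m + 2) / 2 * (1/4)^m"
    by (simp add: Etg_explicit power_mult_distrib[symmetric] mult_ac)
  finally show ?thesis by (simp add: sum_closed)
qed




definition Kop :: "(nat \<Rightarrow> real) \<Rightarrow> nat \<Rightarrow> real" where
  "Kop g s = (g (Suc s) + Etg s g) / 2"

fun Kpow :: "nat \<Rightarrow> (nat \<Rightarrow> real) \<Rightarrow> nat \<Rightarrow> real" where
  "Kpow 0 g = g"
| "Kpow (Suc m) g = Kpow m (Kop g)"

lemma Kop_lin: "Kop (\<lambda>s. \<alpha> * f s + \<beta> * g s + \<gamma>) = (\<lambda>s. \<alpha> * Kop f s + \<beta> * Kop g s + \<gamma>)"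
proof (rule ext)
  fix s
  show "Kop (\<lambda>s. \<alpha> * f s + \<beta> * g s + \<gamma>) s = \<alpha> * Kop f s + \<beta> * Kop g s + \<gamma>"
    unfolding Kop_def Etg_lin by (simp add: field_simps)
qed

lemma Kpow_lin: "Kpow m (\<lambda>s. \<alpha> * f s + \<beta> * g s + \<gamma>) s = \<alpha> * Kpow m f s + \<beta> * Kpow m g s + \<gamma>"
proof (induction m arbitrary: f g s)
  case 0
  then show ?case by simp
next
  case (Suc m)
  show ?case by (simp add: Kop_lin Suc)
qed

definition F :: "nat \<Rightarrow> real \<Rightarrow> real" where
  "F m a = Kpow m (\<lambda>s. a^s) 0"

definition bt :: "real \<Rightarrow> real" where "bt a = (1-a)/(2*(2-a))"
definition gm :: "real \<Rightarrow> real" where "gm a = 1/(2*(2-a))"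

lemma Kop_pow:
  assumes "a \<noteq> 2"
  shows "Kop (\<lambda>s. a^s) = (\<lambda>s. (a/2) * a^s + bt a * (a/2)^s + gm a)"
proof (rule ext)
  fix s
  have "Kop (\<lambda>s. a^s) s = (a * a^s + (1/(2-a) + (a/2)^s * (1-a)/(2-a))) / 2"
    by (simp add: Kop_def Etg_pow[OF assms])
  also have "\<dots> = (a/2) * a^s + bt a * (a/2)^s + gm a"
  proof -
    define e where "e = 1/(2-a)"
    have b: "bt a = (1-a)*e/2" and g: "gm a = e/2" by (simp_all add: bt_def gm_def e_def)
    have t: "(a/2)^s * (1-a)/(2-a) = (a/2)^s * (1-a) * e" by (simp add: e_def)
    have gen: "(a * x + (e + t * (1-a) * e)) / 2 = (a/2) * x + ((1-a)*e/2) * t + e/2" for x t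
      by (simp add: field_simps)
    show ?thesis unfolding b g t e_def[symmetric] by (rule gen)
  qed
  finally show "Kop (\<lambda>s. a^s) s = (a/2) * a^s + bt a * (a/2)^s + gm a" .
qed

lemma F_rec:
  assumes "a \<noteq> 2"
  shows "F (Suc m) a = (a/2) * F m a + bt a * F m (a/2) + gm a"
  by (simp only: F_def Kpow.simps Kop_pow[OF assms] Kpow_lin)

lemma bt_gm:
  assumes "0 \<le> a" "a \<le> 1"
  shows "0 \<le> bt a" "0 \<le> gm a" "bt a + gm a = 1/2" "a/2 + bt a \<le> 1/2"
proof -
  have d: "2 - a \<ge> 1" using assms by simp
  show "0 \<le> bt a" using assms d by (simp add: bt_def)
  show "0 \<le> gm a" using d by (simp add: gm_def)
  show "bt a + gm a = 1/2" using d by (simp add: bt_def gm_def field_simps)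
  have "bt a \<le> (1-a)/2" unfolding bt_def
    by (rule divide_left_mono) (use assms d in auto)
  then show "a/2 + bt a \<le> 1/2" by simp
qed

lemma F_bnd: "0 \<le> a \<Longrightarrow> a \<le> 1 \<Longrightarrow> 0 \<le> F m a \<and> F m a \<le> 1"
proof (induction m arbitrary: a)
  case 0
  then show ?case by (simp add: F_def)
next
  case (Suc m)
  have a2: "a \<noteq> 2" using Suc.prems by simp
  note IH1 = Suc.IH[OF Suc.prems] and IH2 = Suc.IH[of "a/2"]
  have IH2': "0 \<le> F m (a/2) \<and> F m (a/2) \<le> 1" using IH2 Suc.prems by simp
  note b = bt_gm[OF Suc.prems]
  have "(a/2) * F m a \<le> a/2" using IH1 Suc.prems by (simp add: mult_left_le)
  moreover have "bt a * F m (a/2) \<le> bt a" using IH2' b(1) by (simp add: mult_left_le)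
  moreover have "0 \<le> (a/2) * F m a" using IH1 Suc.prems by simp
  moreover have "0 \<le> bt a * F m (a/2)" using IH2' b(1) by simp
  ultimately show ?case using b Suc.prems by (simp add: F_rec[OF a2])
qed

definition D :: "nat \<Rightarrow> real \<Rightarrow> real" where "D m a = F (Suc m) a - F m a"

lemma D_rec: "a \<noteq> 2 \<Longrightarrow> D (Suc m) a = (a/2) * D m a + bt a * D m (a/2)"
  unfolding D_def by (simp add: F_rec algebra_simps)



lemma D_bnd: "0 \<le> a \<Longrightarrow> a \<le> 1 \<Longrightarrow> \<bar>D m a\<bar> \<le> (1/2)^m"
proof (induction m arbitrary: a)
  case 0
  have "0 \<le> F (Suc 0) a \<and> F (Suc 0) a \<le> 1"
    by (rule F_bnd) (use 0 in auto)
  moreover have "F 0 a = 1" by (simp add: F_def)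
  ultimately show ?case unfolding D_def by (simp add: abs_le_iff)
next
  case (Suc m)
  have a2: "a \<noteq> 2" using Suc.prems by simp
  note b = bt_gm[OF Suc.prems]
  have I1: "\<bar>D m a\<bar> \<le> (1/2)^m" by (rule Suc.IH[OF Suc.prems])
  have I2: "\<bar>D m (a/2)\<bar> \<le> (1/2)^m" by (rule Suc.IH) (use Suc.prems in auto)
  have "\<bar>D (Suc m) a\<bar> \<le> \<bar>(a/2) * D m a\<bar> + \<bar>bt a * D m (a/2)\<bar>"
    unfolding D_rec[OF a2] by (rule abs_triangle_ineq)
  also have "\<dots> = (a/2) * \<bar>D m a\<bar> + bt a * \<bar>D m (a/2)\<bar>"
    using Suc.prems b(1) by (simp add: abs_mult)
  also have "\<dots> \<le> (a/2) * (1/2)^m + bt a * (1/2)^m"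
    by (intro add_mono mult_left_mono I1 I2) (use Suc.prems b in auto)
  also have "\<dots> = (a/2 + bt a) * (1/2)^m" by (simp add: algebra_simps)
  also have "\<dots> \<le> (1/2) * (1/2)^m" by (rule mult_right_mono) (use b in auto)
  finally show ?case by simp
qed




lemma F_tele: "F m a = F 0 a + (\<Sum>i<m. D i a)"
  by (induction m) (simp_all add: D_def)

lemma D_summable: "0 \<le> a \<Longrightarrow> a \<le> 1 \<Longrightarrow> summable (\<lambda>i. D i a)"
  by (rule summable_comparison_test[where g="\<lambda>n. (1/2)^n"])
     (auto simp: D_bnd summable_geometric)

definition Fl :: "real \<Rightarrow> real" where "Fl a = 1 + suminf (\<lambda>i. D i a)"

lemma F_lim: "0 \<le> a \<Longrightarrow> a \<le> 1 \<Longrightarrow> (\<lambda>m. F m a) \<longlonglongrightarrow> Fl a"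
proof -
  assume a: "0 \<le> a" "a \<le> 1"
  have "(\<lambda>m. \<Sum>i<m. D i a) \<longlonglongrightarrow> suminf (\<lambda>i. D i a)"
    by (rule summable_LIMSEQ) (rule D_summable[OF a])
  then have "(\<lambda>m. 1 + (\<Sum>i<m. D i a)) \<longlonglongrightarrow> 1 + suminf (\<lambda>i. D i a)"
    by (intro tendsto_add tendsto_const)
  moreover have "F m a = 1 + (\<Sum>i<m. D i a)" for m
    using F_tele[of m a] by (simp add: F_def)
  ultimately show ?thesis by (simp add: Fl_def)
qed

lemma Fl_bnd: "0 \<le> a \<Longrightarrow> a \<le> 1 \<Longrightarrow> 0 \<le> Fl a \<and> Fl a \<le> 1"
proof -
  assume a: "0 \<le> a" "a \<le> 1"
  have "0 \<le> Fl a" by (rule LIMSEQ_le_const[OF F_lim[OF a]]) (use F_bnd[OF a] in auto)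
  moreover have "Fl a \<le> 1" by (rule LIMSEQ_le_const2[OF F_lim[OF a]]) (use F_bnd[OF a] in auto)
  ultimately show ?thesis by simp
qed

lemma Fl_rec: "0 \<le> a \<Longrightarrow> a \<le> 1 \<Longrightarrow> Fl a = (a/2) * Fl a + bt a * Fl (a/2) + gm a"
proof -
  assume a: "0 \<le> a" "a \<le> 1"
  have a2: "0 \<le> a/2" "a/2 \<le> 1" using a by auto
  have "(\<lambda>m. F (Suc m) a) \<longlonglongrightarrow> Fl a" using F_lim[OF a] by (rule LIMSEQ_Suc)
  moreover have "(\<lambda>m. F (Suc m) a) \<longlonglongrightarrow> (a/2) * Fl a + bt a * Fl (a/2) + gm a"
  proof -
    have "(\<lambda>m. (a/2) * F m a + bt a * F m (a/2) + gm a) \<longlonglongrightarrow> (a/2) * Fl a + bt a * Fl (a/2) + gm a"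
      by (intro tendsto_intros F_lim a a2)
    moreover have "F (Suc m) a = (a/2) * F m a + bt a * F m (a/2) + gm a" for m
      using a by (intro F_rec) simp
    ultimately show ?thesis by simp
  qed
  ultimately show ?thesis by (rule LIMSEQ_unique)
qed

lemma Fl_quarter: "18/49 < Fl (1/4) \<and> Fl (1/4) < 18/49 + 2/21"
proof -
  have r1: "Fl (1/4) = (1/8) * Fl (1/4) + (3/14) * Fl (1/8) + 2/7"
    using Fl_rec[of "1/4"] by (simp add: bt_def gm_def)
  have r2: "Fl (1/8) = (1/16) * Fl (1/8) + (7/30) * Fl (1/16) + 4/15"
    using Fl_rec[of "1/8"] by (simp add: bt_def gm_def)
  have b: "0 \<le> Fl (1/16) \<and> Fl (1/16) \<le> 1" by (rule Fl_bnd) auto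
  from r1 r2 b show ?thesis by linarith
qed




definition ty :: "optype list \<Rightarrow> nat \<Rightarrow> optype" where
  "ty xs i = (if i < length xs then xs ! i else LD)"
definition ct :: "optype list \<Rightarrow> nat \<Rightarrow> nat \<Rightarrow> bool" where
  "ct xs y x = (ty xs y = ST \<and> ty xs x = LD)"
definition Rc :: "optype list \<Rightarrow> nat list \<Rightarrow> nat" where
  "Rc xs pre = length (takeWhile (\<lambda>y. ty xs y = ST) (rev pre))"
definition hh :: "optype list \<Rightarrow> (nat \<Rightarrow> real) \<Rightarrow> real" where
  "hh xs g = (\<integral>pre. g (Rc xs pre) \<partial>settle (ct xs) (length xs))"

lemma settle_cong: "(\<And>y x. y < x \<Longrightarrow> x < r \<Longrightarrow> c1 y x = c2 y x) \<Longrightarrow> settle c1 r = settle c2 r"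
proof (induction r)
  case 0
  then show ?case by simp
next
  case (Suc r)
  have IH: "settle c1 r = settle c2 r" by (rule Suc.IH) (use Suc.prems in auto)
  show ?case
  proof (simp only: settle.simps IH, rule bind_pmf_cong[OF refl])
    fix pre assume pre: "pre \<in> set_pmf (settle c2 r)"
    have "takeWhile (\<lambda>y. c1 y r) (rev pre) = takeWhile (\<lambda>y. c2 y r) (rev pre)"
      by (rule takeWhile_cong[OF refl]) (use settle_set[OF pre] Suc.prems in auto)
    then show "move c1 r (rev pre) = move c2 r (rev pre)" by (simp add: move_char)
  qed
qed

lemma tw_take_exact:
  assumes "k \<le> length (takeWhile Q P)" "\<not> Q z"
  shows "length (takeWhile Q (take k P @ z # R)) = k"
proof -
  have "take k P = take k (takeWhile Q P @ dropWhile Q P)" by simp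
  also have "\<dots> = take k (takeWhile Q P)" by (simp only: take_append) (simp add: assms(1))
  finally have tk: "take k P = take k (takeWhile Q P)" .
  have "\<forall>x\<in>set (take k P). Q x"
  proof
    fix x assume "x \<in> set (take k P)"
    then have "x \<in> set (take k (takeWhile Q P))" by (simp only: tk)
    then show "Q x" by (meson in_set_takeD set_takeWhileD)
  qed
  then have "takeWhile Q (take k P @ z # R) = take k P @ takeWhile Q (z # R)"
    by (intro takeWhile_append2) auto
  moreover have "k \<le> length P" using assms(1) tw_le order_trans by blast
  ultimately show ?thesis using assms(2) by simp
qed

lemma int_settle_Suc:
  fixes G :: "nat list \<Rightarrow> real"
  shows "(\<integral>l. G l \<partial>settle c (Suc n)) = (\<integral>pre. (\<integral>l. G l \<partial>move c n (rev pre)) \<partial>settle c n)"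
  unfolding settle.simps(2)
  by (rule integral_bind_pmf_fin) (metis finite_settle settle.simps(2))

lemma hh_snoc: "hh (ys @ [x]) g = hh ys (if x = ST then (\<lambda>s. g (Suc s)) else (\<lambda>s. Etg s g))"
proof -
  define n where "n = length ys"
  define xs' where "xs' = ys @ [x]"
  have ty_eq: "\<And>i. i < n \<Longrightarrow> ty xs' i = ty ys i" by (simp add: ty_def nth_append n_def xs'_def)
  have ty_n: "ty xs' n = x" by (simp add: ty_def n_def xs'_def)
  have sc: "settle (ct xs') n = settle (ct ys) n" by (rule settle_cong) (simp add: ct_def ty_eq)
  have "hh xs' g = (\<integral>l. g (Rc xs' l) \<partial>settle (ct xs') (Suc n))" by (simp add: hh_def n_def xs'_def)
  also have "\<dots> = (\<integral>pre. (\<integral>l. g (Rc xs' l) \<partial>move (ct xs') n (rev pre)) \<partial>settle (ct ys) n)"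
    by (simp only: int_settle_Suc sc)
  also have "\<dots> = (\<integral>pre. (if x = ST then (\<lambda>s. g (Suc s)) else (\<lambda>s. Etg s g)) (Rc ys pre) \<partial>settle (ct ys) n)"
  proof (rule int_cong_pmf)
    fix pre assume pre: "pre \<in> set_pmf (settle (ct ys) n)"
    define P where "P = rev pre"
    have sP: "set P = {..<n}" using settle_set[OF pre] by (simp add: P_def)
    have tw: "takeWhile (\<lambda>y. ty xs' y = ST) P = takeWhile (\<lambda>y. ty ys y = ST) P"
      by (rule takeWhile_cong[OF refl]) (use sP ty_eq in auto)
    have RcP: "Rc ys pre = length (takeWhile (\<lambda>y. ty xs' y = ST) P)"
      by (simp only: Rc_def P_def[symmetric] tw)
    have Rc_new: "Rc xs' (rev (drop k P) @ [n] @ rev (take k P)) = length (takeWhile (\<lambda>y. ty xs' y = ST) (take k P @ n # drop k P))" for k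
      by (simp add: Rc_def)
    show "(\<integral>l. g (Rc xs' l) \<partial>move (ct xs') n (rev pre)) = (if x = ST then (\<lambda>s. g (Suc s)) else (\<lambda>s. Etg s g)) (Rc ys pre)"
    proof (cases x)
      case ST
      have c0: "length (takeWhile (\<lambda>y. ct xs' y n) P) = 0" by (cases P) (simp_all add: ct_def ty_n ST)
      show ?thesis unfolding P_def[symmetric] move_char c0 using RcP ty_n ST by (simp add: Rc_def)
    next
      case LD
      have c: "length (takeWhile (\<lambda>y. ct xs' y n) P) = Rc ys pre"
        by (simp add: ct_def ty_n LD RcP)
      have "(\<integral>l. g (Rc xs' l) \<partial>move (ct xs') n P) = (\<integral>k. g (Rc xs' (rev (drop k P) @ [n] @ rev (take k P))) \<partial>tg (Rc ys pre))"
        by (simp add: move_char c)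
      also have "\<dots> = (\<integral>k. g k \<partial>tg (Rc ys pre))"
      proof (rule int_cong_pmf)
        fix k assume "k \<in> set_pmf (tg (Rc ys pre))"
        then have "k \<le> Rc ys pre" using set_tg by fastforce
        then have "Rc xs' (rev (drop k P) @ [n] @ rev (take k P)) = k"
          unfolding Rc_new RcP by (rule tw_take_exact) (simp add: ty_n LD)
        then show "g (Rc xs' (rev (drop k P) @ [n] @ rev (take k P))) = g k" by simp
      qed
      also have "\<dots> = Etg (Rc ys pre) g" by (rule integral_tg)
      finally show ?thesis using LD by (simp add: P_def)
    qed
  qed
  also have "\<dots> = hh ys (if x = ST then (\<lambda>s. g (Suc s)) else (\<lambda>s. Etg s g))"
    by (simp add: hh_def n_def)
  finally show ?thesis by (simp add: xs'_def)
qed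

lemma hh_nil: "hh [] g = g 0"
  by (simp add: hh_def Rc_def)

lemma hh_lin: "hh ys (\<lambda>s. (f1 s + f2 s) / 2) = (hh ys f1 + hh ys f2) / 2"
proof -
  have i: "integrable (measure_pmf (settle (ct ys) (length ys))) f" for f :: "nat list \<Rightarrow> real"
    by (rule integrable_measure_pmf_finite) (rule finite_settle)
  show ?thesis unfolding hh_def
    by (simp add: Bochner_Integration.integral_add[OF i i])
qed

definition coin :: "optype pmf" where
  "coin = map_pmf (\<lambda>b. if b then ST else LD) (bernoulli_pmf (1/2))"

lemma finite_rep: "finite (set_pmf (replicate_pmf m coin))"
proof (rule finite_subset)
  show "set_pmf (replicate_pmf m coin) \<subseteq> {xs. set xs \<subseteq> UNIV \<and> length xs = m}"
    by (auto simp: set_replicate_pmf)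
  have "finite (UNIV :: optype set)"
  proof -
    have e: "(UNIV :: optype set) = {LD, ST}" using optype.exhaust by auto
    have "finite {LD, ST}" by simp
    then show ?thesis by (subst e)
  qed
  then show "finite {xs. set xs \<subseteq> (UNIV :: optype set) \<and> length xs = m}"
    by (rule finite_lists_length_eq)
qed

lemma rep_snoc: "replicate_pmf (Suc m) p = bind_pmf (replicate_pmf m p) (\<lambda>ys. map_pmf (\<lambda>x. ys @ [x]) p)"
  by (subst Suc_eq_plus1, subst replicate_pmf_distrib) (simp add: replicate_pmf_1 map_pmf_def bind_assoc_pmf bind_return_pmf)

definition AA :: "nat \<Rightarrow> (nat \<Rightarrow> real) \<Rightarrow> real" where
  "AA m g = (\<integral>xs. hh xs g \<partial>replicate_pmf m coin)"

lemma AA_Suc: "AA (Suc m) g = AA m (Kop g)"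
proof -
  have "AA (Suc m) g = (\<integral>ys. (\<integral>xs. hh xs g \<partial>map_pmf (\<lambda>x. ys @ [x]) coin) \<partial>replicate_pmf m coin)"
    unfolding AA_def rep_snoc
    by (rule integral_bind_pmf_fin) (metis finite_rep rep_snoc)
  also have "\<dots> = (\<integral>ys. hh ys (Kop g) \<partial>replicate_pmf m coin)"
  proof (rule Bochner_Integration.integral_cong[OF refl])
    fix ys
    have "(\<integral>xs. hh xs g \<partial>map_pmf (\<lambda>x. ys @ [x]) coin) = (hh ys (\<lambda>s. g (Suc s)) + hh ys (\<lambda>s. Etg s g)) / 2"
      by (simp add: coin_def hh_snoc)
    also have "\<dots> = hh ys (Kop g)"
      unfolding Kop_def by (rule hh_lin[symmetric])
    finally show "(\<integral>xs. hh xs g \<partial>map_pmf (\<lambda>x. ys @ [x]) coin) = hh ys (Kop g)" .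
  qed
  finally show ?thesis by (simp add: AA_def)
qed

lemma AA_Kpow: "AA m g = Kpow m g 0"
proof (induction m arbitrary: g)
  case 0
  then show ?case by (simp add: AA_def hh_nil)
next
  case (Suc m)
  then show ?case by (simp add: AA_Suc)
qed




lemma nc: "\<not> can_swap M m xs m (Suc m)" by (simp add: can_swap_def)

lemma tw_false: "takeWhile (\<lambda>y. False) xs = []" by (cases xs) auto
lemma tw_true: "takeWhile (\<lambda>y. True) xs = xs" by (induction xs) auto

lemma Eg_gen: "Eg M m xs = (\<integral>pre. Etg (length (takeWhile (\<lambda>y. can_swap M m xs y m) (rev pre)))
       (\<lambda>k. Etg (length (takeWhile (\<lambda>y. can_swap M m xs y (Suc m)) (take k (rev pre) @ m # drop k (rev pre)))) (\<lambda>j. (1/2)^(k - j)))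
     \<partial>settle (can_swap M m xs) m)"
  unfolding Eg_def final_order_def by (rule final_gap) (rule nc)

lemma Eg_SC: "Eg SC m xs = 1"
  unfolding Eg_gen by (simp add: can_swap_def tw_false)

lemma Eg_WO: "Eg WO m xs = W m"
proof -
  have "Eg WO m xs = (\<integral>pre. W m \<partial>settle (can_swap WO m xs) m)"
    unfolding Eg_gen
  proof (rule int_cong_pmf)
    fix pre assume pre: "pre \<in> set_pmf (settle (can_swap WO m xs) m)"
    define P where "P = rev pre"
    have sP: "set P = {..<m}" and lP: "length P = m" using settle_set[OF pre] by (auto simp: P_def)
    have c1: "length (takeWhile (\<lambda>y. can_swap WO m xs y m) P) = m"
      by (simp add: can_swap_def lP tw_true)
    have tP: "takeWhile (\<lambda>y. y \<noteq> m) P = P" using sP by (auto simp: takeWhile_eq_all_conv)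
    have c2: "length (takeWhile (\<lambda>y. can_swap WO m xs y (Suc m)) (take k P @ m # drop k P)) = k" if "k \<le> m" for k
    proof -
      have "length (takeWhile (\<lambda>y. y \<noteq> m) (take k P @ m # drop k P)) = k"
        by (rule tw_take_exact) (simp_all add: tP lP that)
      then show ?thesis by (simp add: can_swap_def)
    qed
    show "Etg (length (takeWhile (\<lambda>y. can_swap WO m xs y m) (rev pre)))
       (\<lambda>k. Etg (length (takeWhile (\<lambda>y. can_swap WO m xs y (Suc m)) (take k (rev pre) @ m # drop k (rev pre)))) (\<lambda>j. (1/2)^(k - j))) = W m"
      unfolding P_def[symmetric] c1 W_def by (rule Etg_cong) (simp add: c2)
  qed
  then show ?thesis by simp
qed

lemma Eg_TSO:
  assumes len: "length xs = m"
  shows "Eg TSO m xs = hh xs (\<lambda>s. (1/3) * (1/4)^s + 0 * (1/4)^s + 2/3)"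
proof -
  have ty: "\<And>i. i < m \<Longrightarrow> prog_type m xs i = ty xs i" by (simp add: prog_type_def ty_def len)
  have sc: "settle (can_swap TSO m xs) m = settle (ct xs) m"
  proof (rule settle_cong)
    fix y x assume yx: "y < x" "x < m"
    have t1: "prog_type m xs y = ty xs y" "prog_type m xs x = ty xs x" using yx ty by auto
    show "can_swap TSO m xs y x = ct xs y x"
      unfolding can_swap_def ct_def t1 using yx by simp
  qed
  have "Eg TSO m xs = (\<integral>pre. (1/3) * (1/4)^(Rc xs pre) + 0 * (1/4)^(Rc xs pre) + 2/3 \<partial>settle (ct xs) m)"
    unfolding Eg_gen sc
  proof (rule int_cong_pmf)
    fix pre assume pre: "pre \<in> set_pmf (settle (ct xs) m)"
    have sP: "set (rev pre) = {..<m}" using settle_set[OF pre] by auto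
    have c1: "length (takeWhile (\<lambda>y. can_swap TSO m xs y m) (rev pre)) = Rc xs pre"
      unfolding Rc_def
    proof (rule arg_cong[where f=length], rule takeWhile_cong[OF refl])
      fix y assume "y \<in> set (rev pre)"
      then have y: "y < m" using sP by auto
      have t1: "prog_type m xs y = ty xs y" using y ty by auto
      have t2: "prog_type m xs m = LD" by (simp add: prog_type_def)
      show "can_swap TSO m xs y m = (ty xs y = ST)"
        unfolding can_swap_def t1 t2 by simp
    qed
    have c2: "takeWhile (\<lambda>y. can_swap TSO m xs y (Suc m)) L = []" for L
      by (simp add: can_swap_def prog_type_def tw_false)
    have "Etg (Rc xs pre) (\<lambda>k. (1/2::real)^k) = 1/(2-1/2) + (1/2/2)^(Rc xs pre) * (1-1/2)/(2-1/2)"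
      by (rule Etg_pow) simp
    also have "\<dots> = (1/3) * (1/4)^(Rc xs pre) + 0 * (1/4)^(Rc xs pre) + 2/3" by simp
    finally have e: "Etg (Rc xs pre) (\<lambda>k. (1/2::real)^k) = (1/3) * (1/4)^(Rc xs pre) + 0 * (1/4)^(Rc xs pre) + 2/3" .
    show "Etg (length (takeWhile (\<lambda>y. can_swap TSO m xs y m) (rev pre)))
       (\<lambda>k. Etg (length (takeWhile (\<lambda>y. can_swap TSO m xs y (Suc m)) (take k (rev pre) @ m # drop k (rev pre)))) (\<lambda>j. (1/2)^(k - j)))
       = (1/3) * (1/4)^(Rc xs pre) + 0 * (1/4)^(Rc xs pre) + 2/3"
      unfolding c1 c2 using e by simp
  qed
  then show ?thesis by (simp add: hh_def len)
qed

lemma probA_SC: "prob_A SC m 2 = 1/6"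
  by (simp add: probA_red Eg_SC)

lemma probA_WO: "prob_A WO m 2 = W m / 6"
  by (simp add: probA_red Eg_WO)

lemma probA_TSO: "prob_A TSO m 2 = ((1/3) * F m (1/4) + 2/3) / 6"
proof -
  have "prob_A TSO m 2 = (\<integral>xs. hh xs (\<lambda>s. (1/3) * (1/4)^s + 0 * (1/4)^s + 2/3) \<partial>replicate_pmf m coin) / 6"
  proof -
    have "(\<integral>xs. Eg TSO m xs \<partial>random_prog m) = (\<integral>xs. hh xs (\<lambda>s. (1/3) * (1/4)^s + 0 * (1/4)^s + 2/3) \<partial>replicate_pmf m coin)"
      unfolding random_prog_def coin_def[symmetric]
      by (rule int_cong_pmf, rule Eg_TSO) (simp add: set_replicate_pmf)
    then show ?thesis by (simp only: probA_red)
  qed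
  also have "\<dots> = AA m (\<lambda>s. (1/3) * (1/4)^s + 0 * (1/4)^s + 2/3) / 6" by (simp add: AA_def)
  also have "\<dots> = ((1/3) * F m (1/4) + 2/3) / 6"
    by (simp only: AA_Kpow Kpow_lin F_def) simp
  finally show ?thesis .
qed

lemma W_form: "W m = 7/9 + (1/6) * (of_nat m * (1/4)^m) + (2/9) * (1/4)^m"
  by (simp add: W_closed field_simps)

theorem theorem4:
  shows "((\<lambda>m. prob_A SC m 2) \<longlonglongrightarrow> 1/6) \<and>
         ((\<lambda>m. prob_A WO m 2) \<longlonglongrightarrow> 7/54) \<and>
         (\<exists>L. ((\<lambda>m. prob_A TSO m 2) \<longlonglongrightarrow> L) \<and> 58/441 < L \<and> L < 58/441 + 1/189)"
proof (intro conjI)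
  show "(\<lambda>m. prob_A SC m 2) \<longlonglongrightarrow> 1/6" by (simp add: probA_SC)
  have l1: "(\<lambda>m. of_nat m * (1/4::real)^m) \<longlonglongrightarrow> 0" by (rule powser_times_n_limit_0) simp
  have l2: "(\<lambda>m. (1/4::real)^m) \<longlonglongrightarrow> 0" by (rule LIMSEQ_power_zero) simp
  have "(\<lambda>m. (7/9 + (1/6) * (of_nat m * (1/4::real)^m) + (2/9) * (1/4)^m) / 6) \<longlonglongrightarrow> (7/9 + (1/6) * 0 + (2/9) * 0) / 6"
    by (intro tendsto_intros l1 l2) auto
  then show "(\<lambda>m. prob_A WO m 2) \<longlonglongrightarrow> 7/54" by (simp add: probA_WO W_form)
  have "(\<lambda>m. ((1/3) * F m (1/4) + 2/3) / 6) \<longlonglongrightarrow> ((1/3) * Fl (1/4) + 2/3) / 6"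
    by (intro tendsto_intros F_lim) auto
  moreover have "58/441 < ((1/3) * Fl (1/4) + 2/3) / 6 \<and> ((1/3) * Fl (1/4) + 2/3) / 6 < 58/441 + 1/189"
    using Fl_quarter by (elim conjE, intro conjI) (simp_all add: field_simps)
  ultimately show "\<exists>L. ((\<lambda>m. prob_A TSO m 2) \<longlonglongrightarrow> L) \<and> 58/441 < L \<and> L < 58/441 + 1/189"
    by (auto simp: probA_TSO)
qed


end
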